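(* Let $X_1$ be a connected graph with at least two vertices, $X_2=K_2$ with $V(X_2)=\{1,2\}$, and $X=X_1\square X_2$. Let $\{a,b\}\in E(X_1)$ with $-2\notin\Lambda_{\mathbf f_{ab}}$, let $\varepsilon_1$ be the edge of $X$ joining $(a,1),(b,1)$ and $\varepsilon_2$ the edge joining $(a,2),(b,2)$. Then $\mathbf h_{\varepsilon_1}$ and $\mathbf h_{\varepsilon_2}$ are strongly cospectral with respect to the adjacency matrix $A_{\mathcal L}$ of $\mathcal L(X)$ if and only if $|\vartheta-\vartheta'|\neq2$ for all $\vartheta,\vartheta'\in\Lambda_{\mathbf f_{ab}}$. Moreover, if they are strongly cospectral, then $$\Psi^-_{\mathbf h_{\varepsilon_1},\mathbf h_{\varepsilon_2}}=\Lambda_{\mathbf f_{ab}},\qquad \Psi^+_{\mathbf h_{\varepsilon_1},\mathbf h_{\varepsilon_2}}=\{\vartheta+2:\vartheta\in\Lambda_{\mathbf f_{ab}}\}\cup\{-2\}.$$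
   Context: $X_1\square X_2$ is the Cartesian product (vertex set $V(X_1)\times V(X_2)$, $(x,y)\sim(x',y')$ iff ($x=x'$, $y\sim y'$) or ($y=y'$, $x\sim x'$)). The line graph $\mathcal L(Y)$ has vertex set $E(Y)$, edges adjacent iff they share an endpoint. $\mathbf h_\varepsilon$ is the vertex state in $\mathcal L(X)$ of edge $\varepsilon$; $\mathbf f_{ab}$ the vertex state in $\mathcal L(X_1)$ of $\{a,b\}$, and $\Lambda_{\mathbf f_{ab}}$ its eigenvalue support with respect to the adjacency matrix of $\mathcal L(X_1)$. With $A_{\mathcal L}=\sum_\vartheta\vartheta F_\vartheta$ (orthogonal spectral projections), $\Psi^\pm_{\mathbf h_{\varepsilon_1},\mathbf h_{\varepsilon_2}}=\{\vartheta: F_\vartheta\mathbf h_{\varepsilon_1}=\pm F_\vartheta\mathbf h_{\varepsilon_2}\neq\mathbf 0\}$; strong cospectrality means $F_\vartheta\mathbf h_{\varepsilon_1}=\pm F_\vartheta\mathbf h_{\varepsilon_2}$ for every $\vartheta$. *)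

theory Defs
  imports "HOL-Analysis.Analysis"
begin

text \<open>Simple graphs: finite vertex set V with symmetric irreflexive adjacency
relation adj (assumed to relate only vertices of V). Edges are 2-sets.\<close>

definition graph_edges :: "'v set \<Rightarrow> ('v \<Rightarrow> 'v \<Rightarrow> bool) \<Rightarrow> 'v set set" where
  "graph_edges V adj = {{x, y} | x y. x \<in> V \<and> y \<in> V \<and> adj x y}"

definition graph_connected :: "'v set \<Rightarrow> ('v \<Rightarrow> 'v \<Rightarrow> bool) \<Rightarrow> bool" where
  "graph_connected V adj =
     (\<forall>x\<in>V. \<forall>y\<in>V. (\<lambda>u w. adj u w \<and> u \<in> V \<and> w \<in> V)\<^sup>*\<^sup>* x y)"

definition cart_adj :: "('a \<Rightarrow> 'a \<Rightarrow> bool) \<Rightarrow> ('b \<Rightarrow> 'b \<Rightarrow> bool)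
    \<Rightarrow> 'a \<times> 'b \<Rightarrow> 'a \<times> 'b \<Rightarrow> bool" where
  "cart_adj adj1 adj2 p q =
     ((fst p = fst q \<and> adj2 (snd p) (snd q)) \<or> (snd p = snd q \<and> adj1 (fst p) (fst q)))"

text \<open>Adjacency matrix of the line graph, indexed by edges (used on the edge set).\<close>
definition line_adj :: "'v set \<Rightarrow> 'v set \<Rightarrow> real" where
  "line_adj e f = (if e \<noteq> f \<and> e \<inter> f \<noteq> {} then 1 else 0)"

definition vertex_state :: "'i \<Rightarrow> 'i \<Rightarrow> real" where
  "vertex_state e = (\<lambda>f. if f = e then 1 else 0)"

text \<open>Eigenspace of a real matrix M indexed by the finite set S, for the value t
(the zero space if t is not an eigenvalue).\<close>
definition eigensp :: "'i set \<Rightarrow> ('i \<Rightarrow> 'i \<Rightarrow> real) \<Rightarrow> real \<Rightarrow> ('i \<Rightarrow> real) set" where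
  "eigensp S M t = {u. (\<forall>x. x \<notin> S \<longrightarrow> u x = 0) \<and>
                      (\<forall>x\<in>S. (\<Sum>y\<in>S. M x y * u y) = t * u x)}"

definition spec_proj :: "'i set \<Rightarrow> ('i \<Rightarrow> 'i \<Rightarrow> real) \<Rightarrow> real \<Rightarrow> ('i \<Rightarrow> real) \<Rightarrow> ('i \<Rightarrow> real)" where
  "spec_proj S M t v = (THE u. u \<in> eigensp S M t \<and>
       (\<forall>w\<in>eigensp S M t. (\<Sum>x\<in>S. (v x - u x) * w x) = 0))"

definition eig_support :: "'i set \<Rightarrow> ('i \<Rightarrow> 'i \<Rightarrow> real) \<Rightarrow> ('i \<Rightarrow> real) \<Rightarrow> real set" where
  "eig_support S M v = {t. spec_proj S M t v \<noteq> (\<lambda>_. 0)}"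

definition strongly_cospectral :: "'i set \<Rightarrow> ('i \<Rightarrow> 'i \<Rightarrow> real) \<Rightarrow> ('i \<Rightarrow> real) \<Rightarrow> ('i \<Rightarrow> real) \<Rightarrow> bool" where
  "strongly_cospectral S M u v =
     (\<forall>t. spec_proj S M t u = spec_proj S M t v \<or>
          spec_proj S M t u = (\<lambda>x. - spec_proj S M t v x))"

definition Psi_plus :: "'i set \<Rightarrow> ('i \<Rightarrow> 'i \<Rightarrow> real) \<Rightarrow> ('i \<Rightarrow> real) \<Rightarrow> ('i \<Rightarrow> real) \<Rightarrow> real set" where
  "Psi_plus S M u v = {t. spec_proj S M t u = spec_proj S M t v \<and> spec_proj S M t u \<noteq> (\<lambda>_. 0)}"

definition Psi_minus :: "'i set \<Rightarrow> ('i \<Rightarrow> 'i \<Rightarrow> real) \<Rightarrow> ('i \<Rightarrow> real) \<Rightarrow> ('i \<Rightarrow> real) \<Rightarrow> real set" where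
  "Psi_minus S M u v = {t. spec_proj S M t u = (\<lambda>x. - spec_proj S M t v x) \<and> spec_proj S M t u \<noteq> (\<lambda>_. 0)}"

end

theory Submission
  imports Defs
begin


definition ip :: "'i set \<Rightarrow> ('i \<Rightarrow> real) \<Rightarrow> ('i \<Rightarrow> real) \<Rightarrow> real" where
  "ip S u w = (\<Sum>x\<in>S. u x * w x)"

lemma ip_diff_left: "ip S (\<lambda>x. f x - g x) w = ip S f w - ip S g w"
  by (simp add: ip_def left_diff_distrib sum_subtractf)
lemma ip_add_left: "ip S (\<lambda>x. f x + g x) w = ip S f w + ip S g w"
  by (simp add: ip_def distrib_right sum.distrib)
lemma ip_scale_left: "ip S (\<lambda>x. c * f x) w = c * ip S f w"
  by (simp add: ip_def sum_distrib_left mult.assoc)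
lemma ip_comm: "ip S f w = ip S w f"
  by (simp add: ip_def mult.commute)
lemma ip_diff_right: "ip S w (\<lambda>x. f x - g x) = ip S w f - ip S w g"
  by (simp add: ip_def right_diff_distrib sum_subtractf)
lemma ip_add_right: "ip S w (\<lambda>x. f x + g x) = ip S w f + ip S w g"
  by (simp add: ip_def distrib_left sum.distrib)
lemma ip_scale_right: "ip S w (\<lambda>x. c * f x) = c * ip S w f"
  by (simp add: ip_def sum_distrib_left algebra_simps)
lemma ip_zero_right[simp]: "ip S w (\<lambda>x. 0) = 0" by (simp add: ip_def)
lemma ip_zero_left[simp]: "ip S (\<lambda>x. 0) w = 0" by (simp add: ip_def)
lemma ip_insert: "finite S \<Longrightarrow> s \<notin> S \<Longrightarrow> ip (insert s S) u w = u s * w s + ip S u w"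
  by (simp add: ip_def)
lemma ip_self_nonneg: "ip S u u \<ge> 0"
  by (simp add: ip_def sum_nonneg)
lemma ip_self_zero: "finite S \<Longrightarrow> ip S u u = 0 \<Longrightarrow> x \<in> S \<Longrightarrow> u x = 0"
  unfolding ip_def using sum_nonneg_eq_0_iff[of S "\<lambda>x. u x * u x"] by auto

definition subsp :: "'i set \<Rightarrow> ('i \<Rightarrow> real) set \<Rightarrow> bool" where
  "subsp S W \<longleftrightarrow> (\<lambda>_. 0) \<in> W \<and> (\<forall>u\<in>W. \<forall>w\<in>W. (\<lambda>x. u x + w x) \<in> W)
     \<and> (\<forall>c. \<forall>u\<in>W. (\<lambda>x. c * u x) \<in> W) \<and> (\<forall>u\<in>W. \<forall>x. x \<notin> S \<longrightarrow> u x = 0)"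

lemma subsp_add: "subsp S W \<Longrightarrow> u \<in> W \<Longrightarrow> w \<in> W \<Longrightarrow> (\<lambda>x. u x + w x) \<in> W"
  unfolding subsp_def by blast
lemma subsp_scale: "subsp S W \<Longrightarrow> u \<in> W \<Longrightarrow> (\<lambda>x. c * u x) \<in> W"
  unfolding subsp_def by blast

lemma subsp_diff: "subsp S W \<Longrightarrow> u \<in> W \<Longrightarrow> w \<in> W \<Longrightarrow> (\<lambda>x. u x - w x) \<in> W"
  using subsp_add[of S W u "\<lambda>x. (-1) * w x"] subsp_scale[of S W w "-1"] by simp

lemma proj_exists:
  assumes "finite S" "subsp S W"
  shows "\<exists>u\<in>W. \<forall>w\<in>W. ip S (\<lambda>x. v x - u x) w = 0"
  using assms
proof (induction S arbitrary: W v rule: finite_induct)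
  case empty
  then show ?case unfolding subsp_def ip_def by auto
next
  case (insert s S)
  note sub = insert.prems
  define W' where "W' = {w\<in>W. w s = 0}"
  have sub': "subsp S W'"
    using sub unfolding subsp_def W'_def by auto
  show ?case
  proof (cases "\<forall>w\<in>W. w s = 0")
    case True
    then have "W' = W" unfolding W'_def by auto
    with insert.IH[OF sub'] obtain u where u: "u \<in> W" "\<forall>w\<in>W. ip S (\<lambda>x. v x - u x) w = 0"
      by blast
    have "\<forall>w\<in>W. ip (insert s S) (\<lambda>x. v x - u x) w = 0"
      using u True by (simp add: ip_insert insert.hyps)
    then show ?thesis using u(1) by blast
  next
    case False
    then obtain w0 where w0: "w0 \<in> W" "w0 s \<noteq> 0" by blast
    define w1 where "w1 = (\<lambda>x. inverse (w0 s) * w0 x)"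
    have w1W: "w1 \<in> W" using sub w0 unfolding subsp_def w1_def by blast
    have w1s: "w1 s = 1" using w0 by (simp add: w1_def)
    obtain p where p: "p \<in> W'" "\<forall>w\<in>W'. ip S (\<lambda>x. w1 x - p x) w = 0"
      using insert.IH[OF sub'] by blast
    define d where "d = (\<lambda>x. w1 x - p x)"
    have dW: "d \<in> W" unfolding d_def using subsp_diff[OF sub w1W] p(1) W'_def by auto
    have ds: "d s = 1" using p(1) w1s unfolding d_def W'_def by auto
    have dorth: "ip (insert s S) d w = 0" if "w \<in> W'" for w
      using p(2) that unfolding W'_def d_def by (auto simp: ip_insert insert.hyps)
    have dd: "ip (insert s S) d d > 0"
      using ip_self_nonneg[of S d] ds by (simp add: ip_insert insert.hyps)
    obtain u' where u': "u' \<in> W'" "\<forall>w\<in>W'. ip S (\<lambda>x. v x - u' x) w = 0"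
      using insert.IH[OF sub'] by blast
    have u'orth: "ip (insert s S) (\<lambda>x. v x - u' x) w = 0" if "w \<in> W'" for w
      using u'(2) that unfolding W'_def by (auto simp: ip_insert insert.hyps)
    define c where "c = ip (insert s S) (\<lambda>x. v x - u' x) d / ip (insert s S) d d"
    define u where "u = (\<lambda>x. u' x + c * d x)"
    have uW: "u \<in> W" using subsp_add[OF sub _ subsp_scale[OF sub dW]] u'(1) unfolding u_def W'_def by blast
    have e1: "(\<lambda>x. v x - u x) = (\<lambda>x. (v x - u' x) - c * d x)" unfolding u_def by auto
    have o1: "ip (insert s S) (\<lambda>x. v x - u x) w = 0" if "w \<in> W'" for w
      unfolding e1 ip_diff_left[of _ "\<lambda>x. v x - u' x"] ip_scale_left using u'orth[OF that] dorth[OF that] by simp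
    have o2: "ip (insert s S) (\<lambda>x. v x - u x) d = 0"
      unfolding e1 ip_diff_left[of _ "\<lambda>x. v x - u' x"] ip_scale_left c_def using dd by simp
    have "ip (insert s S) (\<lambda>x. v x - u x) w = 0" if w: "w \<in> W" for w
    proof -
      define w' where "w' = (\<lambda>x. w x - w s * d x)"
      have "(\<lambda>x. w s * d x) \<in> W" using sub dW unfolding subsp_def by blast
      then have "w' \<in> W'" using subsp_diff[OF sub w] ds unfolding w'_def W'_def by auto
      have "w = (\<lambda>x. w' x + w s * d x)" unfolding w'_def by auto
      then have "ip (insert s S) (\<lambda>x. v x - u x) w =
          ip (insert s S) (\<lambda>x. v x - u x) w' + w s * ip (insert s S) (\<lambda>x. v x - u x) d"
        by (metis ip_add_right ip_scale_right)
      then show ?thesis using o1[OF \<open>w' \<in> W'\<close>] o2 by simp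
    qed
    then show ?thesis using uW by blast
  qed
qed

lemma eigensp_subsp: "subsp S (eigensp S M t)"
proof -
  have "(\<Sum>y\<in>S. M x y * (c * u y)) = c * (\<Sum>y\<in>S. M x y * u y)" for x c u
    by (simp add: sum_distrib_left algebra_simps)
  moreover have "(\<Sum>y\<in>S. M x y * (u y + w y)) = (\<Sum>y\<in>S. M x y * u y) + (\<Sum>y\<in>S. M x y * w y)" for x u w
    by (simp add: distrib_left sum.distrib)
  ultimately show ?thesis unfolding subsp_def eigensp_def by (auto simp: distrib_left)
qed

lemma proj_unique:
  assumes "finite S" "u \<in> eigensp S M t" "\<forall>w\<in>eigensp S M t. ip S (\<lambda>x. v x - u x) w = 0"
    "u' \<in> eigensp S M t" "\<forall>w\<in>eigensp S M t. ip S (\<lambda>x. v x - u' x) w = 0"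
  shows "u = u'"
proof -
  define d where "d = (\<lambda>x. u x - u' x)"
  have dW: "d \<in> eigensp S M t" using subsp_diff[OF eigensp_subsp assms(2,4)] d_def by simp
  have "ip S (\<lambda>x. v x - u' x) d - ip S (\<lambda>x. v x - u x) d = 0" using assms dW by simp
  then have "ip S d d = 0" unfolding d_def ip_diff_left[symmetric] by (simp add: algebra_simps)
  then have "\<forall>x\<in>S. d x = 0" using ip_self_zero[OF assms(1)] by blast
  moreover have "\<forall>x. x \<notin> S \<longrightarrow> d x = 0" using dW unfolding eigensp_def by auto
  ultimately show ?thesis unfolding d_def by (metis eq_iff_diff_eq_0 ext)
qed

lemma spec_proj_prop:
  assumes "finite S"
  shows "spec_proj S M t v \<in> eigensp S M t \<and>
         (\<forall>w\<in>eigensp S M t. ip S (\<lambda>x. v x - spec_proj S M t v x) w = 0)"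
proof -
  obtain u where u: "u \<in> eigensp S M t" "\<forall>w\<in>eigensp S M t. ip S (\<lambda>x. v x - u x) w = 0"
    using proj_exists[OF assms eigensp_subsp] by blast
  have "\<exists>!u. u \<in> eigensp S M t \<and> (\<forall>w\<in>eigensp S M t. ip S (\<lambda>x. v x - u x) w = 0)"
    using u proj_unique[OF assms] by blast
  from theI'[OF this] show ?thesis unfolding spec_proj_def ip_def by simp
qed

lemma spec_proj_eqI:
  assumes "finite S" "u \<in> eigensp S M t" "\<forall>w\<in>eigensp S M t. ip S (\<lambda>x. v x - u x) w = 0"
  shows "spec_proj S M t v = u"
  using proj_unique[OF assms(1) _ _ assms(2,3)] spec_proj_prop[OF assms(1)] by blast

lemma spec_proj_add:
  assumes "finite S"
  shows "spec_proj S M t (\<lambda>x. v x + v' x) = (\<lambda>x. spec_proj S M t v x + spec_proj S M t v' x)"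
proof (rule spec_proj_eqI[OF assms])
  let ?P = "spec_proj S M t"
  have a: "?P v \<in> eigensp S M t" "?P v' \<in> eigensp S M t"
    using spec_proj_prop[OF assms] by auto
  then show "(\<lambda>x. ?P v x + ?P v' x) \<in> eigensp S M t"
    using eigensp_subsp[of S M t] unfolding subsp_def by blast
  show "\<forall>w\<in>eigensp S M t. ip S (\<lambda>x. v x + v' x - (?P v x + ?P v' x)) w = 0"
  proof
    fix w assume w: "w \<in> eigensp S M t"
    have "(\<lambda>x. v x + v' x - (?P v x + ?P v' x)) = (\<lambda>x. (v x - ?P v x) + (v' x - ?P v' x))" by auto
    then show "ip S (\<lambda>x. v x + v' x - (?P v x + ?P v' x)) w = 0"
      using spec_proj_prop[OF assms, of M t v] spec_proj_prop[OF assms, of M t v'] w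
      by (simp add: ip_add_left)
  qed
qed

lemma spec_proj_diff:
  assumes "finite S"
  shows "spec_proj S M t (\<lambda>x. v x - v' x) = (\<lambda>x. spec_proj S M t v x - spec_proj S M t v' x)"
proof (rule spec_proj_eqI[OF assms])
  let ?P = "spec_proj S M t"
  have a: "?P v \<in> eigensp S M t" "?P v' \<in> eigensp S M t"
    using spec_proj_prop[OF assms] by auto
  then show "(\<lambda>x. ?P v x - ?P v' x) \<in> eigensp S M t"
    using subsp_diff[OF eigensp_subsp] by blast
  show "\<forall>w\<in>eigensp S M t. ip S (\<lambda>x. v x - v' x - (?P v x - ?P v' x)) w = 0"
  proof
    fix w assume w: "w \<in> eigensp S M t"
    have "(\<lambda>x. v x - v' x - (?P v x - ?P v' x)) = (\<lambda>x. (v x - ?P v x) - (v' x - ?P v' x))" by auto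
    then show "ip S (\<lambda>x. v x - v' x - (?P v x - ?P v' x)) w = 0"
      using spec_proj_prop[OF assms, of M t v] spec_proj_prop[OF assms, of M t v'] w
      by (simp add: ip_diff_left)
  qed
qed



definition lay :: "nat \<Rightarrow> 'a set \<Rightarrow> ('a \<times> nat) set" where "lay i e = (\<lambda>x. (x, i)) ` e"
definition rung :: "'a \<Rightarrow> ('a \<times> nat) set" where "rung x = {(x, 1), (x, 2)}"

lemma fst_lay[simp]: "fst ` lay i e = e" by (simp add: lay_def image_image)
lemma fst_rung[simp]: "fst ` rung x = {x}" by (simp add: rung_def)
lemma lay_inj[simp]: "lay i e = lay i e' \<longleftrightarrow> e = e'"
proof
  assume "lay i e = lay i e'"
  then have "fst ` lay i e = fst ` lay i e'" by simp
  then show "e = e'" by simp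
qed simp
lemma rung_inj[simp]: "rung x = rung y \<longleftrightarrow> x = y"
proof
  assume "rung x = rung y"
  then have "fst ` rung x = fst ` rung y" by simp
  then show "x = y" by simp
qed simp
lemma lay_mem: "(x, j) \<in> lay i e \<longleftrightarrow> x \<in> e \<and> j = i" by (auto simp: lay_def)
lemma lay_empty[simp]: "lay i e = {} \<longleftrightarrow> e = {}" by (auto simp: lay_def)
lemma lay_neq: "e \<noteq> {} \<or> e' \<noteq> {} \<Longrightarrow> i \<noteq> j \<Longrightarrow> lay i e \<noteq> lay j e'"
proof
  assume a: "e \<noteq> {} \<or> e' \<noteq> {}" "i \<noteq> j" and eq: "lay i e = lay j e'"
  from a(1) show False
  proof
    assume "e \<noteq> {}" then obtain x where "x \<in> e" by blast
    then have "(x, i) \<in> lay j e'" using eq lay_mem[of x i i e] by simp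
    then show False using a(2) by (simp add: lay_mem)
  next
    assume "e' \<noteq> {}" then obtain x where "x \<in> e'" by blast
    then have "(x, j) \<in> lay i e" using eq lay_mem[of x j j e'] by simp
    then show False using a(2) by (simp add: lay_mem)
  qed
qed
lemma lay_rung: "i \<in> {1,2} \<Longrightarrow> lay i e \<noteq> rung x"
proof
  assume a: "i \<in> {1,2}" and eq: "lay i e = rung x"
  have "(x, 1) \<in> lay i e" "(x, 2) \<in> lay i e" unfolding eq rung_def by auto
  then show False unfolding lay_mem by simp
qed

lemma line_adj_sym: "line_adj e f = line_adj f e"
  by (auto simp: line_adj_def)
lemma la_same[simp]: "line_adj (lay i e) (lay i e') = line_adj e e'"
proof -
  have "lay i e \<inter> lay i e' = lay i (e \<inter> e')" by (auto simp: lay_def)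
  then show ?thesis by (simp add: line_adj_def)
qed
lemma la_diff: "i \<noteq> j \<Longrightarrow> line_adj (lay i e) (lay j e') = 0"
proof -
  assume "i \<noteq> j"
  then have "lay i e \<inter> lay j e' = {}" by (auto simp: lay_def)
  then show ?thesis by (simp add: line_adj_def)
qed
lemma la_lr: "i \<in> {1,2} \<Longrightarrow> line_adj (lay i e) (rung x) = (if x \<in> e then 1 else 0)"
proof -
  assume a: "i \<in> {1,2}"
  have "lay i e \<inter> rung x \<noteq> {} \<longleftrightarrow> x \<in> e" using a by (auto simp: lay_def rung_def)
  then show ?thesis using lay_rung[OF a, of e x] by (simp add: line_adj_def)
qed
lemma la_rl: "i \<in> {1,2} \<Longrightarrow> line_adj (rung x) (lay i e) = (if x \<in> e then 1 else 0)"
  using la_lr[of i e x] line_adj_sym[of "rung x" "lay i e"] by simp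
lemma la_rr[simp]: "line_adj (rung x) (rung y) = 0"
  by (auto simp: line_adj_def rung_def)

locale prism =
  fixes V1 :: "'a set" and adj1 :: "'a \<Rightarrow> 'a \<Rightarrow> bool"
  assumes fin: "finite V1"
    and inV: "\<And>x y. adj1 x y \<Longrightarrow> x \<in> V1 \<and> y \<in> V1"
    and irr: "\<And>x. \<not> adj1 x x"
begin

definition "E1 = graph_edges V1 adj1"
definition "SS = graph_edges (V1 \<times> {1, 2 :: nat})
   (cart_adj adj1 (\<lambda>y y'. y \<in> {1, 2 :: nat} \<and> y' \<in> {1, 2} \<and> y \<noteq> y'))"

lemma E1_memD: "e \<in> E1 \<Longrightarrow> \<exists>x y. e = {x,y} \<and> adj1 x y \<and> x \<noteq> y \<and> x \<in> V1 \<and> y \<in> V1"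
  unfolding E1_def graph_edges_def using irr inV by blast
lemma E1_sub: "e \<in> E1 \<Longrightarrow> e \<subseteq> V1" using E1_memD by blast
lemma E1_ne: "e \<in> E1 \<Longrightarrow> e \<noteq> {}" using E1_memD by blast
lemma finE1: "finite E1"
proof -
  have "E1 \<subseteq> Pow V1" using E1_sub by blast
  then show ?thesis using fin finite_subset by blast
qed

lemma SS_eq: "SS = lay 1 ` E1 \<union> lay 2 ` E1 \<union> rung ` V1"
proof
  show "SS \<subseteq> lay 1 ` E1 \<union> lay 2 ` E1 \<union> rung ` V1"
  proof
    fix s assume "s \<in> SS"
    then obtain x i y j where s: "s = {(x,i),(y,j)}" "x \<in> V1" "y \<in> V1" "i \<in> {1,2}" "j \<in> {1,2}"
      and c: "(x = y \<and> i \<noteq> j) \<or> (i = j \<and> adj1 x y)"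
      unfolding SS_def graph_edges_def cart_adj_def by auto
    from c show "s \<in> lay 1 ` E1 \<union> lay 2 ` E1 \<union> rung ` V1"
    proof
      assume "x = y \<and> i \<noteq> j"
      then have "s = rung x" using s by (auto simp: rung_def)
      then show ?thesis using s by auto
    next
      assume a: "i = j \<and> adj1 x y"
      then have e: "{x,y} \<in> E1" unfolding E1_def graph_edges_def using s by auto
      have "s = lay i {x,y}" using s a by (auto simp: lay_def)
      then show ?thesis using e s(4) by auto
    qed
  qed
next
  show "lay 1 ` E1 \<union> lay 2 ` E1 \<union> rung ` V1 \<subseteq> SS"
  proof
    fix s assume "s \<in> lay 1 ` E1 \<union> lay 2 ` E1 \<union> rung ` V1"
    then consider (L) i e where "i \<in> {1,2}" "e \<in> E1" "s = lay i e" | (R) x where "x \<in> V1" "s = rung x"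
      by auto
    then show "s \<in> SS"
    proof cases
      case L
      then obtain x y where xy: "e = {x,y}" "adj1 x y" "x \<in> V1" "y \<in> V1" using E1_memD by blast
      have "s = {(x,i),(y,i)}" using L xy by (auto simp: lay_def)
      moreover have "(x,i) \<in> V1 \<times> {1,2}" "(y,i) \<in> V1 \<times> {1,2}" using L xy by auto
      moreover have "cart_adj adj1 (\<lambda>y y'. y \<in> {1, 2 :: nat} \<and> y' \<in> {1, 2} \<and> y \<noteq> y') (x,i) (y,i)"
        using xy by (simp add: cart_adj_def)
      ultimately show ?thesis unfolding SS_def graph_edges_def by blast
    next
      case R
      have "(x,1) \<in> V1 \<times> {1,2::nat}" "(x,2) \<in> V1 \<times> {1,2::nat}" using R by auto
      moreover have "cart_adj adj1 (\<lambda>y y'. y \<in> {1, 2 :: nat} \<and> y' \<in> {1, 2} \<and> y \<noteq> y') (x,1) (x,2)"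
        by (simp add: cart_adj_def)
      ultimately show ?thesis unfolding SS_def graph_edges_def R(2) rung_def by blast
    qed
  qed
qed

lemma fin_parts: "finite (lay 1 ` E1)" "finite (lay 2 ` E1)" "finite (rung ` V1)"
  by (simp_all add: finE1 fin)

lemma SS_cases:
  assumes "s \<in> SS"
  obtains (L1) e where "e \<in> E1" "s = lay 1 e" | (L2) e where "e \<in> E1" "s = lay 2 e"
    | (R) x where "x \<in> V1" "s = rung x"
proof -
  have "s \<in> lay 1 ` E1 \<or> s \<in> lay 2 ` E1 \<or> s \<in> rung ` V1" using assms unfolding SS_eq by simp
  then show ?thesis using that by (elim disjE imageE) simp_all
qed

lemma finSS: "finite SS" unfolding SS_eq using fin_parts by (intro finite_UnI)

lemma l12: "e \<in> E1 \<or> e' \<in> E1 \<Longrightarrow> lay 1 e \<noteq> lay 2 e'"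
proof -
  assume "e \<in> E1 \<or> e' \<in> E1"
  then have "e \<noteq> {} \<or> e' \<noteq> {}" using E1_ne by blast
  from lay_neq[OF this, of 1 2] show ?thesis by simp
qed
lemma lr1: "lay 1 e \<noteq> rung x" using lay_rung[of 1] by simp
lemma lr2: "lay 2 e \<noteq> rung x" using lay_rung[of 2] by simp
lemma rl1: "rung x \<noteq> lay 1 e" by (rule not_sym) (rule lr1)
lemma rl2: "rung x \<noteq> lay 2 e" by (rule not_sym) (rule lr2)

lemma sum_SS: "(\<Sum>s\<in>SS. F s) = (\<Sum>e\<in>E1. F (lay 1 e)) + (\<Sum>e\<in>E1. F (lay 2 e)) + (\<Sum>x\<in>V1. F (rung x))"
proof -
  have d1: "lay 1 ` E1 \<inter> lay 2 ` E1 = {}"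
  proof (rule equals0I)
    fix s assume "s \<in> lay 1 ` E1 \<inter> lay 2 ` E1"
    then obtain e e' where "e \<in> E1" "s = lay 1 e" "s = lay 2 e'" by blast
    then show False using l12[of e e'] by simp
  qed
  have d2: "(lay 1 ` E1 \<union> lay 2 ` E1) \<inter> rung ` V1 = {}"
  proof (rule equals0I)
    fix s assume a: "s \<in> (lay 1 ` E1 \<union> lay 2 ` E1) \<inter> rung ` V1"
    then obtain x where x: "s = rung x" by blast
    from a have "s \<in> lay 1 ` E1 \<or> s \<in> lay 2 ` E1" by simp
    then show False
    proof (elim disjE imageE)
      fix e assume "s = lay 1 e" then have "lay 1 e = rung x" using x by simp
      then show False using lr1[of e x] by blast
    next
      fix e assume "s = lay 2 e" then have "lay 2 e = rung x" using x by simp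
      then show False using lr2[of e x] by blast
    qed
  qed
  have i1: "inj_on (lay i) E1" for i by (rule inj_onI) simp
  have i2: "inj_on rung V1" by (rule inj_onI) simp
  have "(\<Sum>s\<in>SS. F s) = (\<Sum>s\<in>lay 1 ` E1 \<union> lay 2 ` E1. F s) + (\<Sum>s\<in>rung ` V1. F s)"
    unfolding SS_eq by (rule sum.union_disjoint) (use fin_parts d2 in auto)
  also have "(\<Sum>s\<in>lay 1 ` E1 \<union> lay 2 ` E1. F s) = (\<Sum>s\<in>lay 1 ` E1. F s) + (\<Sum>s\<in>lay 2 ` E1. F s)"
    by (rule sum.union_disjoint) (use fin_parts d1 in auto)
  also have "(\<Sum>s\<in>lay 1 ` E1. F s) = (\<Sum>e\<in>E1. F (lay 1 e))"
    using sum.reindex[OF i1[of 1], of F] by simp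
  also have "(\<Sum>s\<in>lay 2 ` E1. F s) = (\<Sum>e\<in>E1. F (lay 2 e))"
    using sum.reindex[OF i1[of 2], of F] by simp
  also have "(\<Sum>s\<in>rung ` V1. F s) = (\<Sum>x\<in>V1. F (rung x))"
    using sum.reindex[OF i2, of F] by simp
  finally show ?thesis .
qed

lemma layE1: "lay i e \<in> SS \<Longrightarrow> i \<in> {1,2} \<Longrightarrow> e \<in> E1"
proof -
  assume a: "lay i e \<in> SS" "i \<in> {1,2}"
  from a(1) show ?thesis
  proof (cases rule: SS_cases)
    case (L1 e')
    then have A: "lay i e = lay 1 e'" "e' \<in> E1" by simp_all
    show ?thesis
    proof (cases "i = 1")
      case True then show ?thesis using A by simp
    next
      case False then have "i = 2" using a(2) by simp
      then show ?thesis using A l12[of e' e] by simp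
    qed
  next
    case (L2 e')
    then have B: "lay i e = lay 2 e'" "e' \<in> E1" by simp_all
    show ?thesis
    proof (cases "i = 2")
      case True then show ?thesis using B by simp
    next
      case False then have "i = 1" using a(2) by simp
      then show ?thesis using B l12[of e e'] by simp
    qed
  next
    case (R x) then show ?thesis using lay_rung[OF a(2), of e x] by simp
  qed
qed

definition mk :: "('a set \<Rightarrow> real) \<Rightarrow> ('a set \<Rightarrow> real) \<Rightarrow> ('a \<Rightarrow> real) \<Rightarrow> ('a \<times> nat) set \<Rightarrow> real" where
  "mk g1 g2 r s = (if s \<in> lay 1 ` E1 then g1 (fst ` s) else if s \<in> lay 2 ` E1 then g2 (fst ` s)
      else if s \<in> rung ` V1 then r (the_elem (fst ` s)) else 0)"

lemma mk_l1[simp]: "e \<in> E1 \<Longrightarrow> mk g1 g2 r (lay 1 e) = g1 e"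
  by (simp add: mk_def)
lemma mk_l1'[simp]: "e \<in> E1 \<Longrightarrow> mk g1 g2 r (lay (Suc 0) e) = g1 e"
  using mk_l1 by simp
lemma mk_l2[simp]: "e \<in> E1 \<Longrightarrow> mk g1 g2 r (lay 2 e) = g2 e"
proof -
  assume e: "e \<in> E1"
  then have "lay 2 e \<notin> lay 1 ` E1" using l12 by blast
  then show ?thesis using e by (simp add: mk_def)
qed
lemma mk_r[simp]: "x \<in> V1 \<Longrightarrow> mk g1 g2 r (rung x) = r x"
proof -
  assume x: "x \<in> V1"
  have "rung x \<noteq> lay i e" if "i \<in> {1,2}" for i e using lay_rung[OF that, of e x] by simp
  then have "rung x \<notin> lay 1 ` E1" "rung x \<notin> lay 2 ` E1" by blast+
  then show ?thesis using x by (simp add: mk_def)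
qed
lemma mk_out: "s \<notin> SS \<Longrightarrow> mk g1 g2 r s = 0"
proof -
  assume "s \<notin> SS"
  then have "s \<notin> lay 1 ` E1" "s \<notin> lay 2 ` E1" "s \<notin> rung ` V1" unfolding SS_eq by simp_all
  then show ?thesis unfolding mk_def by simp
qed
lemma mk_zero[simp]: "mk (\<lambda>_. 0) (\<lambda>_. 0) (\<lambda>_. 0) = (\<lambda>_. 0)"
  unfolding mk_def by (rule ext) simp

lemma vec_eq:
  assumes "\<forall>s. s \<notin> SS \<longrightarrow> u s = 0" "\<forall>s. s \<notin> SS \<longrightarrow> w s = 0"
    "\<forall>e\<in>E1. u (lay 1 e) = w (lay 1 e)" "\<forall>e\<in>E1. u (lay 2 e) = w (lay 2 e)"
    "\<forall>x\<in>V1. u (rung x) = w (rung x)"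
  shows "u = w"
proof
  fix s show "u s = w s"
  proof (cases "s \<in> SS")
    case True then show ?thesis using assms(3-5) by (cases rule: SS_cases) auto
  next
    case False then show ?thesis using assms(1,2) by auto
  qed
qed

lemma mk_repr: "\<forall>s. s \<notin> SS \<longrightarrow> u s = 0 \<Longrightarrow> u = mk (\<lambda>e. u (lay 1 e)) (\<lambda>e. u (lay 2 e)) (\<lambda>x. u (rung x))"
  by (rule vec_eq) (auto simp: mk_out)

definition "A1 g e = (\<Sum>e'\<in>E1. line_adj e e' * g e')"
definition "Nv g x = (\<Sum>e\<in>E1. if x \<in> e then g e else (0::real))"
definition "NTv r e = (\<Sum>x\<in>V1. if x \<in> e then r x else (0::real))"

lemma Lv_l1:
  assumes e: "e \<in> E1"
  shows "(\<Sum>s\<in>SS. line_adj (lay 1 e) s * mk g1 g2 r s) = A1 g1 e + NTv r e"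
proof -
  have t1: "(\<Sum>e'\<in>E1. line_adj (lay 1 e) (lay 1 e') * mk g1 g2 r (lay 1 e')) = A1 g1 e"
    unfolding A1_def by (intro sum.cong) auto
  have t2: "(\<Sum>e'\<in>E1. line_adj (lay 1 e) (lay 2 e') * mk g1 g2 r (lay 2 e')) = 0"
    by (simp add: la_diff)
  have t3: "(\<Sum>x\<in>V1. line_adj (lay 1 e) (rung x) * mk g1 g2 r (rung x)) = NTv r e"
    unfolding NTv_def by (intro sum.cong) (auto simp: la_lr)
  show ?thesis unfolding sum_SS t1 t2 t3 by simp
qed

lemma Lv_l2:
  assumes e: "e \<in> E1"
  shows "(\<Sum>s\<in>SS. line_adj (lay 2 e) s * mk g1 g2 r s) = A1 g2 e + NTv r e"
proof -
  have t1: "(\<Sum>e'\<in>E1. line_adj (lay 2 e) (lay 2 e') * mk g1 g2 r (lay 2 e')) = A1 g2 e"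
    unfolding A1_def by (intro sum.cong) auto
  have t2: "(\<Sum>e'\<in>E1. line_adj (lay 2 e) (lay 1 e') * mk g1 g2 r (lay 1 e')) = 0"
    by (simp add: la_diff)
  have t3: "(\<Sum>x\<in>V1. line_adj (lay 2 e) (rung x) * mk g1 g2 r (rung x)) = NTv r e"
    unfolding NTv_def by (intro sum.cong) (auto simp: la_lr)
  show ?thesis unfolding sum_SS t1 t2 t3 by simp
qed

lemma Lv_r:
  assumes x: "x \<in> V1"
  shows "(\<Sum>s\<in>SS. line_adj (rung x) s * mk g1 g2 r s) = Nv (\<lambda>e. g1 e + g2 e) x"
proof -
  have "(\<Sum>e\<in>E1. line_adj (rung x) (lay 1 e) * mk g1 g2 r (lay 1 e)) = (\<Sum>e\<in>E1. if x \<in> e then g1 e else 0)"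
    by (intro sum.cong) (auto simp: la_rl)
  moreover have "(\<Sum>e\<in>E1. line_adj (rung x) (lay 2 e) * mk g1 g2 r (lay 2 e)) = (\<Sum>e\<in>E1. if x \<in> e then g2 e else 0)"
    by (intro sum.cong) (auto simp: la_rl)
  moreover have "Nv (\<lambda>e. g1 e + g2 e) x = (\<Sum>e\<in>E1. if x \<in> e then g1 e else 0) + (\<Sum>e\<in>E1. if x \<in> e then g2 e else 0)"
    unfolding Nv_def sum.distrib[symmetric] by (intro sum.cong) auto
  ultimately show ?thesis unfolding sum_SS by simp
qed

lemma ip_SS: "ip SS (mk g1 g2 r) (mk g1' g2' r') = ip E1 g1 g1' + ip E1 g2 g2' + ip V1 r r'"
proof -
  have "(\<Sum>e\<in>E1. mk g1 g2 r (lay 1 e) * mk g1' g2' r' (lay 1 e)) = ip E1 g1 g1'"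
    unfolding ip_def by (intro sum.cong) auto
  moreover have "(\<Sum>e\<in>E1. mk g1 g2 r (lay 2 e) * mk g1' g2' r' (lay 2 e)) = ip E1 g2 g2'"
    unfolding ip_def by (intro sum.cong) auto
  moreover have "(\<Sum>x\<in>V1. mk g1 g2 r (rung x) * mk g1' g2' r' (rung x)) = ip V1 r r'"
    unfolding ip_def by (intro sum.cong) auto
  ultimately show ?thesis unfolding ip_def[of SS] sum_SS by simp
qed

lemma Lv_l1'[simp]: "e \<in> E1 \<Longrightarrow> (\<Sum>s\<in>SS. line_adj (lay (Suc 0) e) s * mk g1 g2 r s) = A1 g1 e + NTv r e"
  using Lv_l1 by simp

lemma ball_SS: "(\<forall>s\<in>SS. P s) \<longleftrightarrow> (\<forall>e\<in>E1. P (lay 1 e)) \<and> (\<forall>e\<in>E1. P (lay 2 e)) \<and> (\<forall>x\<in>V1. P (rung x))"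
proof
  assume "\<forall>s\<in>SS. P s" then show "(\<forall>e\<in>E1. P (lay 1 e)) \<and> (\<forall>e\<in>E1. P (lay 2 e)) \<and> (\<forall>x\<in>V1. P (rung x))"
    unfolding SS_eq by simp
next
  assume "(\<forall>e\<in>E1. P (lay 1 e)) \<and> (\<forall>e\<in>E1. P (lay 2 e)) \<and> (\<forall>x\<in>V1. P (rung x))"
  then show "\<forall>s\<in>SS. P s" by (auto elim: SS_cases)
qed

lemma eig_mk: "mk g1 g2 r \<in> eigensp SS line_adj t \<longleftrightarrow>
   (\<forall>e\<in>E1. A1 g1 e + NTv r e = t * g1 e \<and> A1 g2 e + NTv r e = t * g2 e) \<and>
   (\<forall>x\<in>V1. Nv (\<lambda>e. g1 e + g2 e) x = t * r x)"
proof -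
  have "mk g1 g2 r \<in> eigensp SS line_adj t \<longleftrightarrow>
      (\<forall>s\<in>SS. (\<Sum>y\<in>SS. line_adj s y * mk g1 g2 r y) = t * mk g1 g2 r s)"
    unfolding eigensp_def using mk_out by auto
  also have "\<dots> \<longleftrightarrow> (\<forall>e\<in>E1. A1 g1 e + NTv r e = t * g1 e) \<and> (\<forall>e\<in>E1. A1 g2 e + NTv r e = t * g2 e) \<and>
      (\<forall>x\<in>V1. Nv (\<lambda>e. g1 e + g2 e) x = t * r x)"
    unfolding ball_SS by (simp add: Lv_l1 Lv_l2 Lv_r)
  finally show ?thesis by blast
qed

lemma A1_add: "A1 (\<lambda>e. g e + h e) e = A1 g e + A1 h e"
  by (simp add: A1_def distrib_left sum.distrib)
lemma A1_diff: "A1 (\<lambda>e. g e - h e) e = A1 g e - A1 h e"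
  by (simp add: A1_def right_diff_distrib sum_subtractf)
lemma A1_scale: "A1 (\<lambda>e. c * g e) e = c * A1 g e"
  by (simp add: A1_def sum_distrib_left algebra_simps)
lemma Nv_scale: "Nv (\<lambda>e. c * g e) x = c * Nv g x"
  unfolding Nv_def sum_distrib_left by (intro sum.cong) auto
lemma Nv_zero[simp]: "Nv (\<lambda>e. 0) x = 0"
  unfolding Nv_def by simp
lemma NTv_scale: "NTv (\<lambda>x. c * r x) e = c * NTv r e"
  unfolding NTv_def sum_distrib_left by (intro sum.cong) auto
lemma NTv_cong: "(\<And>x. x \<in> V1 \<Longrightarrow> r x = r' x) \<Longrightarrow> NTv r e = NTv r' e"
  unfolding NTv_def by (intro sum.cong) auto

lemma NTv_edge: "e \<in> E1 \<Longrightarrow> e = {x, y} \<Longrightarrow> x \<noteq> y \<Longrightarrow> NTv h e = h x + h y"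
proof -
  assume a: "e \<in> E1" "e = {x, y}" "x \<noteq> y"
  have "NTv h e = sum h (V1 \<inter> e)" unfolding NTv_def using fin by (simp add: sum.inter_restrict)
  also have "V1 \<inter> e = e" using E1_sub[OF a(1)] by blast
  finally show ?thesis using a by simp
qed

lemma NTNv: "e \<in> E1 \<Longrightarrow> NTv (Nv g) e = A1 g e + 2 * g e"
proof -
  assume e: "e \<in> E1"
  then obtain x y where xy: "e = {x,y}" "x \<noteq> y" "x \<in> V1" "y \<in> V1" using E1_memD by blast
  have "NTv (Nv g) e = Nv g x + Nv g y" using NTv_edge[OF e xy(1,2)] .
  also have "\<dots> = (\<Sum>e'\<in>E1. (if x \<in> e' then g e' else 0) + (if y \<in> e' then g e' else 0))"
    unfolding Nv_def sum.distrib ..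
  also have "\<dots> = (\<Sum>e'\<in>E1. line_adj e e' * g e' + (if e' = e then 2 * g e' else 0))"
  proof (intro sum.cong refl)
    fix e' assume e': "e' \<in> E1"
    then obtain u v where uv: "e' = {u,v}" "u \<noteq> v" using E1_memD by blast
    show "(if x \<in> e' then g e' else 0) + (if y \<in> e' then g e' else 0) =
          line_adj e e' * g e' + (if e' = e then 2 * g e' else 0)"
    proof (cases "e' = e")
      case True then show ?thesis using xy by (simp add: line_adj_def)
    next
      case False
      have "\<not> (x \<in> e' \<and> y \<in> e')"
      proof
        assume "x \<in> e' \<and> y \<in> e'"
        then have "e \<subseteq> e'" using xy by blast
        moreover have "card e = 2" "card e' = 2" using xy uv by auto
        moreover have "finite e'" using uv by simp
        ultimately have "e = e'" using card_subset_eq[of e' e] by simp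
        then show False using False by simp
      qed
      moreover have "e \<inter> e' \<noteq> {} \<longleftrightarrow> x \<in> e' \<or> y \<in> e'" using xy by blast
      ultimately show ?thesis using False by (auto simp: line_adj_def)
    qed
  qed
  also have "\<dots> = A1 g e + 2 * g e" unfolding sum.distrib A1_def using e finE1 by simp
  finally show ?thesis .
qed

lemma adjoint: "ip V1 (Nv g) r = ip E1 g (NTv r)"
proof -
  have "ip V1 (Nv g) r = (\<Sum>x\<in>V1. \<Sum>e\<in>E1. if x \<in> e then g e * r x else 0)"
    unfolding ip_def Nv_def sum_distrib_right by (intro sum.cong) auto
  also have "\<dots> = (\<Sum>e\<in>E1. \<Sum>x\<in>V1. if x \<in> e then g e * r x else 0)" by (rule sum.swap)
  also have "\<dots> = ip E1 g (NTv r)"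
    unfolding ip_def NTv_def sum_distrib_left by (intro sum.cong) auto
  finally show ?thesis .
qed

lemma NTv_neg: "NTv (\<lambda>x. - r x) e = - NTv r e"
  using NTv_scale[of "-1" r e] by simp

lemma mk_diff: "(\<lambda>s. mk g1 g2 r s - mk g1' g2' r' s) = mk (\<lambda>e. g1 e - g1' e) (\<lambda>e. g2 e - g2' e) (\<lambda>x. r x - r' x)"
  unfolding mk_def by (rule ext) simp
lemma mk_add: "(\<lambda>s. mk g1 g2 r s + mk g1' g2' r' s) = mk (\<lambda>e. g1 e + g1' e) (\<lambda>e. g2 e + g2' e) (\<lambda>x. r x + r' x)"
  unfolding mk_def by (rule ext) simp

lemma eig_zero_off: "w \<in> eigensp SS line_adj t \<Longrightarrow> \<forall>s. s \<notin> SS \<longrightarrow> w s = 0"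
  unfolding eigensp_def by blast

lemma comp_zero_off:
  assumes "\<forall>s. s \<notin> SS \<longrightarrow> w s = 0" "e \<notin> E1"
  shows "w (lay 1 e) = 0" "w (lay 2 e) = 0"
  using assms layE1[of 1 e] layE1[of 2 e] by auto

lemma A1_eig: "g \<in> eigensp E1 line_adj t \<Longrightarrow> e \<in> E1 \<Longrightarrow> A1 g e = t * g e"
  unfolding eigensp_def A1_def by blast

lemma A1_neg: "A1 (\<lambda>e. - g e) e = - A1 g e"
  using A1_scale[of "-1" g e] by simp
lemma Nv_add: "Nv (\<lambda>e. g e + h e) x = Nv g x + Nv h x"
  unfolding Nv_def sum.distrib[symmetric] by (intro sum.cong) auto

lemma NTv_zero[simp]: "NTv (\<lambda>x. 0) e = 0" unfolding NTv_def by simp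

end

locale prism_ab = prism +
  fixes a b :: 'a
  assumes ab: "adj1 a b"
begin

definition "f = vertex_state {a, b}"
definition "h1 = vertex_state {(a, 1 :: nat), (b, 1)}"
definition "h2 = vertex_state {(a, 2 :: nat), (b, 2)}"
definition "Q t = spec_proj E1 line_adj t f"

lemma abE: "{a, b} \<in> E1"
  unfolding E1_def graph_edges_def using ab inV by blast

lemma lay_ab: "lay i {a, b} = {(a, i), (b, i)}" by (simp add: lay_def)

lemma h1_mk: "h1 = mk f (\<lambda>_. 0) (\<lambda>_. 0)"
proof (rule vec_eq)
  have L: "{(a, 1 :: nat), (b, 1)} = lay 1 {a, b}" by (simp add: lay_ab)
  have inS: "lay 1 {a,b} \<in> SS" unfolding SS_eq using abE by blast
  show "\<forall>s. s \<notin> SS \<longrightarrow> h1 s = 0" unfolding h1_def vertex_state_def L using inS by auto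
  show "\<forall>s. s \<notin> SS \<longrightarrow> mk f (\<lambda>_. 0) (\<lambda>_. 0) s = 0" using mk_out by blast
  show "\<forall>e\<in>E1. h1 (lay 1 e) = mk f (\<lambda>_. 0) (\<lambda>_. 0) (lay 1 e)"
    unfolding h1_def vertex_state_def L f_def by auto
  show "\<forall>e\<in>E1. h1 (lay 2 e) = mk f (\<lambda>_. 0) (\<lambda>_. 0) (lay 2 e)"
    unfolding h1_def vertex_state_def L using l12 abE by auto
  show "\<forall>x\<in>V1. h1 (rung x) = mk f (\<lambda>_. 0) (\<lambda>_. 0) (rung x)"
  proof
    fix x assume x: "x \<in> V1"
    have "rung x \<noteq> lay 1 {a,b}" by (rule rl1)
    then show "h1 (rung x) = mk f (\<lambda>_. 0) (\<lambda>_. 0) (rung x)" using x unfolding h1_def vertex_state_def L by simp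
  qed
qed

lemma h2_mk: "h2 = mk (\<lambda>_. 0) f (\<lambda>_. 0)"
proof (rule vec_eq)
  have L: "{(a, 2 :: nat), (b, 2)} = lay 2 {a, b}" by (simp add: lay_ab)
  have inS: "lay 2 {a,b} \<in> SS" unfolding SS_eq using abE by blast
  show "\<forall>s. s \<notin> SS \<longrightarrow> h2 s = 0" unfolding h2_def vertex_state_def L using inS by auto
  show "\<forall>s. s \<notin> SS \<longrightarrow> mk (\<lambda>_. 0) f (\<lambda>_. 0) s = 0" using mk_out by blast
  show "\<forall>e\<in>E1. h2 (lay 1 e) = mk (\<lambda>_. 0) f (\<lambda>_. 0) (lay 1 e)"
    unfolding h2_def vertex_state_def L using l12 abE by auto
  show "\<forall>e\<in>E1. h2 (lay 2 e) = mk (\<lambda>_. 0) f (\<lambda>_. 0) (lay 2 e)"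
    unfolding h2_def vertex_state_def L f_def by auto
  show "\<forall>x\<in>V1. h2 (rung x) = mk (\<lambda>_. 0) f (\<lambda>_. 0) (rung x)"
  proof
    fix x assume x: "x \<in> V1"
    have "rung x \<noteq> lay 2 {a,b}" by (rule rl2)
    then show "h2 (rung x) = mk (\<lambda>_. 0) f (\<lambda>_. 0) (rung x)" using x unfolding h2_def vertex_state_def L by simp
  qed
qed

lemma ff: "ip E1 f f = 1"
proof -
  have "ip E1 f f = (\<Sum>e\<in>E1. if e = {a,b} then 1 else 0)"
    unfolding ip_def f_def vertex_state_def by (intro sum.cong) auto
  also have "\<dots> = 1" using abE finE1 by simp
  finally show ?thesis .
qed

lemma Q_prop: "Q t \<in> eigensp E1 line_adj t" "\<forall>w\<in>eigensp E1 line_adj t. ip E1 (\<lambda>x. f x - Q t x) w = 0"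
  using spec_proj_prop[OF finE1, of line_adj t f] unfolding Q_def by auto

lemma eig_zero_E1: "g \<in> eigensp E1 line_adj t \<Longrightarrow> \<forall>e. e \<notin> E1 \<longrightarrow> g e = 0"
  unfolding eigensp_def by blast

lemma eig_E1I: "(\<forall>e. e \<notin> E1 \<longrightarrow> g e = 0) \<Longrightarrow> (\<forall>e\<in>E1. A1 g e = t * g e) \<Longrightarrow> g \<in> eigensp E1 line_adj t"
  unfolding eigensp_def A1_def by blast

lemma hm: "(\<lambda>s. h1 s - h2 s) = mk f (\<lambda>e. - f e) (\<lambda>_. 0)"
  unfolding h1_mk h2_mk mk_diff by simp
lemma hp: "(\<lambda>s. h1 s + h2 s) = mk f f (\<lambda>_. 0)"
  unfolding h1_mk h2_mk mk_add by simp

lemma P_minus: "spec_proj SS line_adj t (\<lambda>s. h1 s - h2 s) = mk (Q t) (\<lambda>e. - Q t e) (\<lambda>_. 0)"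
proof (rule spec_proj_eqI[OF finSS])
  show "mk (Q t) (\<lambda>e. - Q t e) (\<lambda>_. 0) \<in> eigensp SS line_adj t"
    unfolding eig_mk using A1_eig[OF Q_prop(1)] by (simp add: A1_neg)
  show "\<forall>w\<in>eigensp SS line_adj t. ip SS (\<lambda>x. h1 x - h2 x - mk (Q t) (\<lambda>e. - Q t e) (\<lambda>_. 0) x) w = 0"
  proof
    fix w assume w: "w \<in> eigensp SS line_adj t"
    have z: "\<forall>s. s \<notin> SS \<longrightarrow> w s = 0" using eig_zero_off[OF w] .
    define w1 where "w1 = (\<lambda>e. w (lay 1 e))"
    define w2 where "w2 = (\<lambda>e. w (lay 2 e))"
    define r where "r = (\<lambda>x. w (rung x))"
    have wr: "w = mk w1 w2 r" using mk_repr[OF z] unfolding w1_def w2_def r_def .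
    have eq: "\<forall>e\<in>E1. A1 w1 e + NTv r e = t * w1 e \<and> A1 w2 e + NTv r e = t * w2 e"
      using w unfolding wr eig_mk by blast
    have G: "(\<lambda>e. w1 e - w2 e) \<in> eigensp E1 line_adj t"
    proof (rule eig_E1I)
      show "\<forall>e. e \<notin> E1 \<longrightarrow> w1 e - w2 e = 0" using comp_zero_off[OF z] unfolding w1_def w2_def by simp
      show "\<forall>e\<in>E1. A1 (\<lambda>e. w1 e - w2 e) e = t * (w1 e - w2 e)"
      proof
        fix e assume e: "e \<in> E1"
        from eq e have "A1 w1 e + NTv r e = t * w1 e" "A1 w2 e + NTv r e = t * w2 e" by auto
        then show "A1 (\<lambda>e. w1 e - w2 e) e = t * (w1 e - w2 e)"
          unfolding A1_diff right_diff_distrib by linarith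
      qed
    qed
    have "(\<lambda>x. h1 x - h2 x - mk (Q t) (\<lambda>e. - Q t e) (\<lambda>_. 0) x) =
        mk (\<lambda>e. f e - Q t e) (\<lambda>e. - f e - - Q t e) (\<lambda>x. 0 - 0)"
    proof -
      have hmx: "h1 x - h2 x = mk f (\<lambda>e. - f e) (\<lambda>_. 0) x" for x using fun_cong[OF hm, of x] by simp
      have "(\<lambda>x. h1 x - h2 x - mk (Q t) (\<lambda>e. - Q t e) (\<lambda>_. 0) x) =
          (\<lambda>x. mk f (\<lambda>e. - f e) (\<lambda>_. 0) x - mk (Q t) (\<lambda>e. - Q t e) (\<lambda>_. 0) x)"
        by (simp only: hmx)
      also have "\<dots> = mk (\<lambda>e. f e - Q t e) (\<lambda>e. - f e - - Q t e) (\<lambda>x. 0 - 0)" by (rule mk_diff)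
      finally show ?thesis .
    qed
    then have "ip SS (\<lambda>x. h1 x - h2 x - mk (Q t) (\<lambda>e. - Q t e) (\<lambda>_. 0) x) w =
       ip E1 (\<lambda>e. f e - Q t e) w1 + ip E1 (\<lambda>e. - f e - - Q t e) w2 + ip V1 (\<lambda>x. 0 - 0) r"
      using ip_SS[of "\<lambda>e. f e - Q t e" "\<lambda>e. - f e - - Q t e" "\<lambda>x. 0 - 0" w1 w2 r] wr by simp
    also have "\<dots> = ip E1 (\<lambda>e. f e - Q t e) (\<lambda>e. w1 e - w2 e)"
      unfolding ip_def by (simp add: sum_subtractf[symmetric] sum.distrib[symmetric] algebra_simps)
    also have "\<dots> = 0" using Q_prop(2) G by blast
    finally show "ip SS (\<lambda>x. h1 x - h2 x - mk (Q t) (\<lambda>e. - Q t e) (\<lambda>_. 0) x) w = 0" .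
  qed
qed

lemma P_plus:
  assumes t: "t \<noteq> -2"
  shows "spec_proj SS line_adj t (\<lambda>s. h1 s + h2 s) =
    mk (\<lambda>e. t / (t + 2) * Q (t - 2) e) (\<lambda>e. t / (t + 2) * Q (t - 2) e) (\<lambda>x. 2 / (t + 2) * Nv (Q (t - 2)) x)"
proof -
  define g where "g = Q (t - 2)"
  define c where "c = t / (t + 2)"
  define d where "d = 2 / (t + 2)"
  have t2: "t + 2 \<noteq> 0" using t by simp
  have cd: "d = 1 - c" using t2 unfolding c_def d_def by (simp add: field_simps)
  have c1: "c * (t - 2) + d * t = t * c"
  proof -
    have "c * (t - 2) + d * t = (t * (t - 2) + 2 * t) / (t + 2)" unfolding c_def d_def by (simp add: add_divide_distrib)
    also have "t * (t - 2) + 2 * t = t * t" by (simp add: algebra_simps)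
    finally show ?thesis unfolding c_def by simp
  qed
  have c2: "2 * c = t * d" unfolding c_def d_def using t2 by (simp add: field_simps)
  have gE: "g \<in> eigensp E1 line_adj (t - 2)" using Q_prop(1) unfolding g_def .
  have "spec_proj SS line_adj t (\<lambda>s. h1 s + h2 s) = mk (\<lambda>e. c * g e) (\<lambda>e. c * g e) (\<lambda>x. d * Nv g x)"
  proof (rule spec_proj_eqI[OF finSS])
    have X: "A1 (\<lambda>e. c * g e) e + NTv (\<lambda>x. d * Nv g x) e = t * (c * g e)" if e: "e \<in> E1" for e
    proof -
      have "A1 (\<lambda>e. c * g e) e + NTv (\<lambda>x. d * Nv g x) e = c * A1 g e + d * (A1 g e + 2 * g e)"
        using NTNv[OF e, of g] by (simp add: A1_scale NTv_scale)
      also have "\<dots> = (c * (t - 2) + d * t) * g e" unfolding A1_eig[OF gE e] by (simp add: algebra_simps)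
      also have "\<dots> = t * (c * g e)" using c1 by simp
      finally show ?thesis .
    qed
    have Y: "Nv (\<lambda>e. c * g e + c * g e) x = t * (d * Nv g x)" for x
      unfolding Nv_add Nv_scale using c2 by (simp add: algebra_simps)
    show "mk (\<lambda>e. c * g e) (\<lambda>e. c * g e) (\<lambda>x. d * Nv g x) \<in> eigensp SS line_adj t"
      unfolding eig_mk using X Y by blast
    show "\<forall>w\<in>eigensp SS line_adj t. ip SS (\<lambda>x. h1 x + h2 x - mk (\<lambda>e. c * g e) (\<lambda>e. c * g e) (\<lambda>x. d * Nv g x) x) w = 0"
    proof
      fix w assume w: "w \<in> eigensp SS line_adj t"
      have z: "\<forall>s. s \<notin> SS \<longrightarrow> w s = 0" using eig_zero_off[OF w] .
      define w1 where "w1 = (\<lambda>e. w (lay 1 e))"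
      define w2 where "w2 = (\<lambda>e. w (lay 2 e))"
      define r where "r = (\<lambda>x. w (rung x))"
      have wr: "w = mk w1 w2 r" using mk_repr[OF z] unfolding w1_def w2_def r_def .
      have eq1: "\<forall>e\<in>E1. A1 w1 e + NTv r e = t * w1 e \<and> A1 w2 e + NTv r e = t * w2 e"
        and eq2: "\<forall>x\<in>V1. Nv (\<lambda>e. w1 e + w2 e) x = t * r x"
        using w unfolding wr eig_mk by blast+
      define G where "G = (\<lambda>e. w1 e + w2 e)"
      have NTG: "NTv r e = G e" if e: "e \<in> E1" for e
      proof -
        have F1: "NTv (Nv G) e = t * NTv r e"
        proof -
          have "NTv (Nv G) e = NTv (\<lambda>x. t * r x) e" by (rule NTv_cong) (use eq2 in \<open>simp add: G_def\<close>)
          then show ?thesis by (simp add: NTv_scale)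
        qed
        have F2: "NTv (Nv G) e = A1 w1 e + A1 w2 e + 2 * (w1 e + w2 e)"
          using NTNv[OF e, of G] unfolding G_def A1_add by simp
        from eq1 e have F3: "A1 w1 e + NTv r e = t * w1 e" and F4: "A1 w2 e + NTv r e = t * w2 e" by auto
        have "(t + 2) * NTv r e = (t + 2) * G e"
          unfolding G_def distrib_right distrib_left using F1 F2 F3 F4 by (smt (verit))
        then show ?thesis using t2 by simp
      qed
      have Geig: "G \<in> eigensp E1 line_adj (t - 2)"
      proof (rule eig_E1I)
        show "\<forall>e. e \<notin> E1 \<longrightarrow> G e = 0" using comp_zero_off[OF z] unfolding G_def w1_def w2_def by simp
        show "\<forall>e\<in>E1. A1 G e = (t - 2) * G e"
        proof
          fix e assume e: "e \<in> E1"
          from eq1 e have F3: "A1 w1 e + NTv r e = t * w1 e" and F4: "A1 w2 e + NTv r e = t * w2 e" by auto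
          have "NTv r e = w1 e + w2 e" using NTG[OF e] unfolding G_def .
          then show "A1 G e = (t - 2) * G e"
            unfolding G_def A1_add left_diff_distrib distrib_left using F3 F4 by (smt (verit))
        qed
      qed
      have orth0: "ip E1 (\<lambda>e. f e - g e) G = 0" using Q_prop(2) Geig unfolding g_def by blast
      have hpx: "h1 x + h2 x = mk f f (\<lambda>_. 0) x" for x using fun_cong[OF hp, of x] by simp
      have "(\<lambda>x. h1 x + h2 x - mk (\<lambda>e. c * g e) (\<lambda>e. c * g e) (\<lambda>x. d * Nv g x) x) =
          (\<lambda>x. mk f f (\<lambda>_. 0) x - mk (\<lambda>e. c * g e) (\<lambda>e. c * g e) (\<lambda>x. d * Nv g x) x)"
        by (simp only: hpx)
      also have "\<dots> = mk (\<lambda>e. f e - c * g e) (\<lambda>e. f e - c * g e) (\<lambda>x. 0 - d * Nv g x)" by (rule mk_diff)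
      finally have e1: "(\<lambda>x. h1 x + h2 x - mk (\<lambda>e. c * g e) (\<lambda>e. c * g e) (\<lambda>x. d * Nv g x) x) =
          mk (\<lambda>e. f e - c * g e) (\<lambda>e. f e - c * g e) (\<lambda>x. 0 - d * Nv g x)" .
      have "ip SS (\<lambda>x. h1 x + h2 x - mk (\<lambda>e. c * g e) (\<lambda>e. c * g e) (\<lambda>x. d * Nv g x) x) w =
         ip E1 (\<lambda>e. f e - c * g e) w1 + ip E1 (\<lambda>e. f e - c * g e) w2 + ip V1 (\<lambda>x. 0 - d * Nv g x) r"
        unfolding e1 wr by (rule ip_SS)
      also have "\<dots> = (ip E1 f w1 - c * ip E1 g w1) + (ip E1 f w2 - c * ip E1 g w2) - d * ip V1 (Nv g) r"
        by (simp only: ip_diff_left ip_scale_left ip_zero_left)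
      also have "ip V1 (Nv g) r = ip E1 g G"
      proof -
        have "ip V1 (Nv g) r = ip E1 g (NTv r)" by (rule adjoint)
        also have "\<dots> = ip E1 g G" unfolding ip_def using NTG by (intro sum.cong) auto
        finally show ?thesis .
      qed
      also have "ip E1 g G = ip E1 g w1 + ip E1 g w2" unfolding G_def by (rule ip_add_right)
      also have "ip E1 f w1 + ip E1 f w2 - (ip E1 g w1 + ip E1 g w2) = 0"
        using orth0 unfolding G_def ip_diff_left ip_add_right by simp
      then have "ip E1 f w1 - c * ip E1 g w1 + (ip E1 f w2 - c * ip E1 g w2) - d * (ip E1 g w1 + ip E1 g w2) = 0"
        unfolding cd by (simp add: algebra_simps)
      finally show "ip SS (\<lambda>x. h1 x + h2 x - mk (\<lambda>e. c * g e) (\<lambda>e. c * g e) (\<lambda>x. d * Nv g x) x) w = 0" .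
    qed
  qed
  then show ?thesis unfolding c_def d_def g_def .
qed

lemma P_m2: "spec_proj SS line_adj (-2) (\<lambda>s. h1 s + h2 s) \<noteq> (\<lambda>_. 0)"
proof
  assume P0: "spec_proj SS line_adj (-2) (\<lambda>s. h1 s + h2 s) = (\<lambda>_. 0)"
  define w0 where "w0 = mk f f (\<lambda>x. - Nv f x)"
  have X: "A1 f e + NTv (\<lambda>x. - Nv f x) e = -2 * f e" if e: "e \<in> E1" for e
    unfolding NTv_neg NTNv[OF e] by simp
  have Y: "Nv (\<lambda>e. f e + f e) x = -2 * - Nv f x" for x
    unfolding Nv_add by simp
  have w0E: "w0 \<in> eigensp SS line_adj (-2)"
    unfolding w0_def eig_mk using X Y by blast
  have "ip SS (\<lambda>x. h1 x + h2 x - spec_proj SS line_adj (-2) (\<lambda>s. h1 s + h2 s) x) w0 = 0"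
    using spec_proj_prop[OF finSS, of line_adj "-2" "\<lambda>s. h1 s + h2 s"] w0E by blast
  then have "ip SS (\<lambda>x. h1 x + h2 x) w0 = 0" unfolding P0 by simp
  then have "ip SS (mk f f (\<lambda>_. 0)) w0 = 0" unfolding hp .
  then have "ip E1 f f + ip E1 f f + ip V1 (\<lambda>_. 0) (\<lambda>x. - Nv f x) = 0"
    unfolding w0_def ip_SS .
  then show False using ff by simp
qed

lemma Lam_iff: "t \<in> eig_support E1 line_adj f \<longleftrightarrow> Q t \<noteq> (\<lambda>_. 0)"
  unfolding eig_support_def Q_def by simp

lemma Q_zeroI: "\<forall>e\<in>E1. Q t e = 0 \<Longrightarrow> Q t = (\<lambda>_. 0)"
  using eig_zero_E1[OF Q_prop(1), of t] by (intro ext) (metis)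

lemma supp_minus: "spec_proj SS line_adj t (\<lambda>s. h1 s - h2 s) \<noteq> (\<lambda>_. 0) \<longleftrightarrow> Q t \<noteq> (\<lambda>_. 0)"
proof
  assume a: "spec_proj SS line_adj t (\<lambda>s. h1 s - h2 s) \<noteq> (\<lambda>_. 0)"
  show "Q t \<noteq> (\<lambda>_. 0)"
  proof
    assume "Q t = (\<lambda>_. 0)"
    then show False using a unfolding P_minus by simp
  qed
next
  assume a: "Q t \<noteq> (\<lambda>_. 0)"
  show "spec_proj SS line_adj t (\<lambda>s. h1 s - h2 s) \<noteq> (\<lambda>_. 0)"
  proof
    assume "spec_proj SS line_adj t (\<lambda>s. h1 s - h2 s) = (\<lambda>_. 0)"
    then have z: "mk (Q t) (\<lambda>e. - Q t e) (\<lambda>_. 0) = (\<lambda>_. 0)" unfolding P_minus .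
    have "\<forall>e\<in>E1. Q t e = 0"
    proof
      fix e assume e: "e \<in> E1"
      from fun_cong[OF z, of "lay 1 e"] e show "Q t e = 0" by simp
    qed
    then show False using a Q_zeroI by blast
  qed
qed

lemma supp_plus:
  assumes t: "t \<noteq> -2" and m2: "Q (-2) = (\<lambda>_. 0)"
  shows "spec_proj SS line_adj t (\<lambda>s. h1 s + h2 s) \<noteq> (\<lambda>_. 0) \<longleftrightarrow> Q (t - 2) \<noteq> (\<lambda>_. 0)"
proof
  assume a: "spec_proj SS line_adj t (\<lambda>s. h1 s + h2 s) \<noteq> (\<lambda>_. 0)"
  show "Q (t - 2) \<noteq> (\<lambda>_. 0)"
  proof
    assume "Q (t - 2) = (\<lambda>_. 0)"
    then show False using a unfolding P_plus[OF t] by simp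
  qed
next
  assume a: "Q (t - 2) \<noteq> (\<lambda>_. 0)"
  then have t0: "t \<noteq> 0" using m2 by auto
  have t2: "t + 2 \<noteq> 0" using t by simp
  show "spec_proj SS line_adj t (\<lambda>s. h1 s + h2 s) \<noteq> (\<lambda>_. 0)"
  proof
    assume "spec_proj SS line_adj t (\<lambda>s. h1 s + h2 s) = (\<lambda>_. 0)"
    then have z: "mk (\<lambda>e. t / (t + 2) * Q (t - 2) e) (\<lambda>e. t / (t + 2) * Q (t - 2) e)
        (\<lambda>x. 2 / (t + 2) * Nv (Q (t - 2)) x) = (\<lambda>_. 0)" unfolding P_plus[OF t] .
    have "\<forall>e\<in>E1. Q (t - 2) e = 0"
    proof
      fix e assume e: "e \<in> E1"
      from fun_cong[OF z, of "lay 1 e"] e have "t / (t + 2) * Q (t - 2) e = 0" by simp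
      then show "Q (t - 2) e = 0" using t0 t2 by simp
    qed
    then show False using a Q_zeroI by blast
  qed
qed

end

lemma logic_AB1:
  fixes A B :: "'x \<Rightarrow> real"
  shows "(A = B) \<longleftrightarrow> (\<lambda>x. A x - B x) = (\<lambda>_. 0)"
    and "(A = (\<lambda>x. - B x)) \<longleftrightarrow> (\<lambda>x. A x + B x) = (\<lambda>_. 0)"
  by (auto simp: fun_eq_iff eq_neg_iff_add_eq_0)

lemma logic_AB3:
  fixes A B :: "'x \<Rightarrow> real"
  assumes h: "A = B"
  shows "A \<noteq> (\<lambda>_. 0) \<longleftrightarrow> (\<lambda>x. A x + B x) \<noteq> (\<lambda>_. 0)"
proof -
  have e: "(\<lambda>x. A x + B x) = (\<lambda>x. 2 * A x)" using h by (auto simp: fun_eq_iff)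
  show ?thesis unfolding e by (auto simp: fun_eq_iff)
qed

lemma logic_AB4:
  fixes A B :: "'x \<Rightarrow> real"
  assumes h: "A = (\<lambda>x. - B x)"
  shows "A \<noteq> (\<lambda>_. 0) \<longleftrightarrow> (\<lambda>x. A x - B x) \<noteq> (\<lambda>_. 0)"
proof -
  have hb: "B x = - A x" for x using fun_cong[OF h, of x] by simp
  have e: "(\<lambda>x. A x - B x) = (\<lambda>x. 2 * A x)" by (rule ext) (simp add: hb)
  show ?thesis unfolding e by (auto simp: fun_eq_iff)
qed

lemma set_logic:
  fixes L :: "real set"
  assumes m2: "-2 \<notin> L"
  shows "(\<forall>t. t \<notin> L \<or> t \<notin> (\<lambda>t. t + 2) ` L \<union> {-2}) \<longleftrightarrow> (\<forall>t\<in>L. \<forall>t'\<in>L. \<bar>t - t'\<bar> \<noteq> 2)"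
proof
  assume a: "\<forall>t. t \<notin> L \<or> t \<notin> (\<lambda>t. t + 2) ` L \<union> {-2}"
  show "\<forall>t\<in>L. \<forall>t'\<in>L. \<bar>t - t'\<bar> \<noteq> 2"
  proof (intro ballI notI)
    fix t t' assume t: "t \<in> L" and t': "t' \<in> L" and ab: "\<bar>t - t'\<bar> = 2"
    then have "t = t' + 2 \<or> t' = t + 2" by (auto simp: abs_if split: if_splits)
    then show False
    proof
      assume "t = t' + 2" then have "t \<in> (\<lambda>t. t + 2) ` L" using t' by blast
      then show False using a t by blast
    next
      assume "t' = t + 2" then have "t' \<in> (\<lambda>t. t + 2) ` L" using t by blast
      then show False using a t' by blast
    qed
  qed
next
  assume a: "\<forall>t\<in>L. \<forall>t'\<in>L. \<bar>t - t'\<bar> \<noteq> 2"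
  show "\<forall>t. t \<notin> L \<or> t \<notin> (\<lambda>t. t + 2) ` L \<union> {-2}"
  proof (intro allI)
    fix t show "t \<notin> L \<or> t \<notin> (\<lambda>t. t + 2) ` L \<union> {-2}"
    proof (rule ccontr)
      assume "\<not> (t \<notin> L \<or> t \<notin> (\<lambda>t. t + 2) ` L \<union> {-2})"
      then have tL: "t \<in> L" and "t \<in> (\<lambda>t. t + 2) ` L \<or> t = -2" by auto
      then obtain t' where "t' \<in> L" "t = t' + 2" using m2 by auto
      then show False using a tL by force
    qed
  qed
qed

lemma (in prism_ab) final:
  assumes m2: "-2 \<notin> eig_support E1 line_adj f"
  shows "(strongly_cospectral SS line_adj h1 h2 \<longleftrightarrow>
           (\<forall>t\<in>eig_support E1 line_adj f. \<forall>t'\<in>eig_support E1 line_adj f. \<bar>t - t'\<bar> \<noteq> 2))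
    \<and> (strongly_cospectral SS line_adj h1 h2 \<longrightarrow>
         Psi_minus SS line_adj h1 h2 = eig_support E1 line_adj f \<and>
         Psi_plus SS line_adj h1 h2 = (\<lambda>t. t + 2) ` eig_support E1 line_adj f \<union> {-2})"
proof -
  define L where "L = eig_support E1 line_adj f"
  define L' where "L' = (\<lambda>t. t + 2) ` L \<union> {-2}"
  define A where "A t = spec_proj SS line_adj t h1" for t
  define B where "B t = spec_proj SS line_adj t h2" for t
  have m2': "Q (-2) = (\<lambda>_. 0)" using m2 Lam_iff by blast
  have Sm: "(\<lambda>x. A t x - B t x) \<noteq> (\<lambda>_. 0) \<longleftrightarrow> t \<in> L" for t
    using spec_proj_diff[OF finSS, of line_adj t h1 h2] supp_minus[of t] Lam_iff[of t]
    unfolding A_def B_def L_def by simp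
  have Sp: "(\<lambda>x. A t x + B t x) \<noteq> (\<lambda>_. 0) \<longleftrightarrow> t \<in> L'" for t
  proof (cases "t = -2")
    case True
    then show ?thesis using spec_proj_add[OF finSS, of line_adj t h1 h2] P_m2
      unfolding A_def B_def L'_def by simp
  next
    case False
    have "t \<in> L' \<longleftrightarrow> t - 2 \<in> L"
    proof
      assume "t \<in> L'" then obtain t' where "t' \<in> L" "t = t' + 2" using False unfolding L'_def by auto
      then show "t - 2 \<in> L" by simp
    next
      assume "t - 2 \<in> L" then have "(t - 2) + 2 \<in> (\<lambda>t. t + 2) ` L" by blast
      then show "t \<in> L'" unfolding L'_def by simp
    qed
    then show ?thesis using spec_proj_add[OF finSS, of line_adj t h1 h2] supp_plus[OF False m2'] Lam_iff[of "t - 2"]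
      unfolding A_def B_def L_def by simp
  qed
  have eqv: "(A t = B t \<or> A t = (\<lambda>x. - B t x)) \<longleftrightarrow> (t \<notin> L \<or> t \<notin> L')" for t
    using logic_AB1[of "A t" "B t"] Sm[of t] Sp[of t] by blast
  have SC: "strongly_cospectral SS line_adj h1 h2 \<longleftrightarrow> (\<forall>t. t \<notin> L \<or> t \<notin> L')"
    unfolding strongly_cospectral_def eqv[symmetric] unfolding A_def B_def ..
  have m2L: "-2 \<notin> L" using m2 unfolding L_def .
  have PM: "Psi_minus SS line_adj h1 h2 = {t. t \<notin> L' \<and> t \<in> L}"
  proof -
    have "t \<in> Psi_minus SS line_adj h1 h2 \<longleftrightarrow> t \<notin> L' \<and> t \<in> L" for t
    proof -
      have "t \<in> Psi_minus SS line_adj h1 h2 \<longleftrightarrow> A t = (\<lambda>x. - B t x) \<and> A t \<noteq> (\<lambda>_. 0)"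
        unfolding Psi_minus_def A_def B_def by simp
      also have "\<dots> \<longleftrightarrow> (\<lambda>x. A t x + B t x) = (\<lambda>_. 0) \<and> (\<lambda>x. A t x - B t x) \<noteq> (\<lambda>_. 0)"
        using logic_AB1(2)[of "A t" "B t"] logic_AB4[of "A t" "B t"] by blast
      finally show ?thesis using Sm[of t] Sp[of t] by blast
    qed
    then show ?thesis by blast
  qed
  have PP: "Psi_plus SS line_adj h1 h2 = {t. t \<notin> L \<and> t \<in> L'}"
  proof -
    have "t \<in> Psi_plus SS line_adj h1 h2 \<longleftrightarrow> t \<notin> L \<and> t \<in> L'" for t
    proof -
      have "t \<in> Psi_plus SS line_adj h1 h2 \<longleftrightarrow> A t = B t \<and> A t \<noteq> (\<lambda>_. 0)"
        unfolding Psi_plus_def A_def B_def by simp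
      also have "\<dots> \<longleftrightarrow> (\<lambda>x. A t x - B t x) = (\<lambda>_. 0) \<and> (\<lambda>x. A t x + B t x) \<noteq> (\<lambda>_. 0)"
        using logic_AB1(1)[of "A t" "B t"] logic_AB3[of "A t" "B t"] by blast
      finally show ?thesis using Sm[of t] Sp[of t] by blast
    qed
    then show ?thesis by blast
  qed
  have "(strongly_cospectral SS line_adj h1 h2 \<longleftrightarrow> (\<forall>t\<in>L. \<forall>t'\<in>L. \<bar>t - t'\<bar> \<noteq> 2))"
    unfolding SC L'_def using set_logic[OF m2L] .
  moreover have "strongly_cospectral SS line_adj h1 h2 \<longrightarrow>
         Psi_minus SS line_adj h1 h2 = L \<and> Psi_plus SS line_adj h1 h2 = L'"
    unfolding SC PM PP by blast
  ultimately show ?thesis unfolding L_def L'_def by blast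
qed


lemma final_global:
  fixes V1 :: "'a set" and adj1 :: "'a \<Rightarrow> 'a \<Rightarrow> bool" and a b :: 'a
  assumes "finite V1" "\<And>x y. adj1 x y \<Longrightarrow> x \<in> V1 \<and> y \<in> V1" "\<And>x. \<not> adj1 x x" "adj1 a b"
    "-2 \<notin> eig_support (graph_edges V1 adj1) line_adj (vertex_state {a, b})"
  shows "(strongly_cospectral (graph_edges (V1 \<times> {1, 2 :: nat}) (cart_adj adj1 (\<lambda>y y'. y \<in> {1, 2 :: nat} \<and> y' \<in> {1, 2} \<and> y \<noteq> y'))) line_adj
             (vertex_state {(a, 1 :: nat), (b, 1)}) (vertex_state {(a, 2 :: nat), (b, 2)}) \<longleftrightarrow>
           (\<forall>t\<in>eig_support (graph_edges V1 adj1) line_adj (vertex_state {a, b}).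
             \<forall>t'\<in>eig_support (graph_edges V1 adj1) line_adj (vertex_state {a, b}). \<bar>t - t'\<bar> \<noteq> 2))
    \<and> (strongly_cospectral (graph_edges (V1 \<times> {1, 2 :: nat}) (cart_adj adj1 (\<lambda>y y'. y \<in> {1, 2 :: nat} \<and> y' \<in> {1, 2} \<and> y \<noteq> y'))) line_adj
             (vertex_state {(a, 1 :: nat), (b, 1)}) (vertex_state {(a, 2 :: nat), (b, 2)}) \<longrightarrow>
         Psi_minus (graph_edges (V1 \<times> {1, 2 :: nat}) (cart_adj adj1 (\<lambda>y y'. y \<in> {1, 2 :: nat} \<and> y' \<in> {1, 2} \<and> y \<noteq> y'))) line_adj
             (vertex_state {(a, 1 :: nat), (b, 1)}) (vertex_state {(a, 2 :: nat), (b, 2)}) = eig_support (graph_edges V1 adj1) line_adj (vertex_state {a, b}) \<and>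
         Psi_plus (graph_edges (V1 \<times> {1, 2 :: nat}) (cart_adj adj1 (\<lambda>y y'. y \<in> {1, 2 :: nat} \<and> y' \<in> {1, 2} \<and> y \<noteq> y'))) line_adj
             (vertex_state {(a, 1 :: nat), (b, 1)}) (vertex_state {(a, 2 :: nat), (b, 2)}) = (\<lambda>t. t + 2) ` eig_support (graph_edges V1 adj1) line_adj (vertex_state {a, b}) \<union> {-2})"
proof -
  interpret prism_ab V1 adj1 a b using assms(1-4) by unfold_locales auto
  show ?thesis using final assms(5) unfolding E1_def SS_def f_def h1_def h2_def by blast
qed

theorem mainTheorem18:
  fixes V1 :: "'a set" and adj1 :: "'a \<Rightarrow> 'a \<Rightarrow> bool" and a b :: 'a
  assumes "finite V1" and "card V1 \<ge> 2"
    and "\<And>x y. adj1 x y \<Longrightarrow> x \<in> V1 \<and> y \<in> V1"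
    and "\<And>x y. adj1 x y \<Longrightarrow> adj1 y x"
    and "\<And>x. \<not> adj1 x x"
    and "graph_connected V1 adj1"
    and "adj1 a b"
    and "-2 \<notin> eig_support (graph_edges V1 adj1) line_adj (vertex_state {a, b})"
  defines "V \<equiv> V1 \<times> {1, 2 :: nat}"
    and "adj \<equiv> cart_adj adj1 (\<lambda>y y'. y \<in> {1, 2 :: nat} \<and> y' \<in> {1, 2} \<and> y \<noteq> y')"
    and "\<Lambda> \<equiv> eig_support (graph_edges V1 adj1) line_adj (vertex_state {a, b})"
    and "h1 \<equiv> vertex_state {(a, 1 :: nat), (b, 1)}"
    and "h2 \<equiv> vertex_state {(a, 2 :: nat), (b, 2)}"
  shows "(strongly_cospectral (graph_edges V adj) line_adj h1 h2 \<longleftrightarrow>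
           (\<forall>t\<in>\<Lambda>. \<forall>t'\<in>\<Lambda>. \<bar>t - t'\<bar> \<noteq> 2))
    \<and> (strongly_cospectral (graph_edges V adj) line_adj h1 h2 \<longrightarrow>
         Psi_minus (graph_edges V adj) line_adj h1 h2 = \<Lambda> \<and>
         Psi_plus (graph_edges V adj) line_adj h1 h2 = (\<lambda>t. t + 2) ` \<Lambda> \<union> {-2})"
    using final_global[of V1 adj1 a b] assms unfolding V_def adj_def \<Lambda>_def h1_def h2_def by blast

end
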